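(* Let $(C,\mathfrak p,\mathfrak d)$ be a regular $q$-cycle coalgebra with $\mathfrak p_{11}^1\ne0$. Then $\mathfrak d=\mathfrak p$ (equivalently, the associated solution of the braid equation is involutive).
   Context: $K$ is an algebraically closed field of characteristic $0$ and $n\ge2$. $C$ is the coalgebra dual to $K[y]/\langle y^n\rangle$: basis $x_0,\dots,x_{n-1}$, $\Delta(x_i)=\sum_{j+k=i}x_j\otimes x_k$, $\epsilon(x_i)=\delta_{i0}$; $C\otimes C$ has the tensor product coalgebra structure; Sweedler notation $\Delta(b)=b_{(1)}\otimes b_{(2)}$. For linear maps $\mathfrak p,\mathfrak d\colon C\otimes C\to C$ write $a\cdot b=\mathfrak p(a\otimes b)$, $a:b=\mathfrak d(a\otimes b)$, $\mathfrak p(x_i\otimes x_j)=\sum_{k=0}^{n-1}\mathfrak p_{ij}^kx_k$, $\mathfrak d(x_i\otimes x_j)=\sum_{k=0}^{n-1}\mathfrak d_{ij}^kx_k$. A triple $(C,\mathfrak p,\mathfrak d)$ with $\mathfrak p,\mathfrak d$ coalgebra morphisms is a regular $q$-magma coalgebra if there are coalgebra morphisms $a\otimes b\mapsto a^b$, $a\otimes b\mapsto a_b$ from $C\otimes C$ to $C$ with $a^{b_{(1)}}\cdot b_{(2)}=(a\cdot b_{(1)})^{b_{(2)}}=\epsilon(b)a$ and $(a:b_{(2)})_{b_{(1)}}=a_{b_{(2)}}:b_{(1)}=\epsilon(b)a$. It is a regular $q$-cycle coalgebra if moreover for all $a,b,c$: (1) $(a\cdot b_{(1)})\cdot(c:b_{(2)})=(a\cdot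 c_{(2)})\cdot(b\cdot c_{(1)})$; (2) $(a\cdot b_{(1)}):(c\cdot b_{(2)})=(a:c_{(2)})\cdot(b:c_{(1)})$; (3) $(a:b_{(1)}):(c:b_{(2)})=(a:c_{(2)}):(b\cdot c_{(1)})$. *)

theory Defs
  imports "HOL-Computational_Algebra.Polynomial"
begin

definition alg_closed_field :: "'a::field itself \<Rightarrow> bool" where
  "alg_closed_field _ \<longleftrightarrow> (\<forall>q::'a poly. degree q \<ge> 1 \<longrightarrow> (\<exists>x. poly q x = 0))"

text \<open>Elements of C are coefficient vectors v (v = sum of v k * x_k), supported on {..<n}.\<close>
definition Cvec :: "nat \<Rightarrow> (nat \<Rightarrow> 'a::zero) set" where
  "Cvec n = {v. \<forall>k\<ge>n. v k = 0}"

definition bas :: "nat \<Rightarrow> nat \<Rightarrow> 'a::{zero,one}" where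
  "bas i = (\<lambda>k. if k = i then 1 else 0)"

text \<open>Linear map C \<otimes> C \<rightarrow> C with structure constants F i j k (F(x_i \<otimes> x_j) = sum_k F i j k x_k),
  applied to the pure tensor v \<otimes> w.\<close>
definition bil :: "nat \<Rightarrow> (nat \<Rightarrow> nat \<Rightarrow> nat \<Rightarrow> 'a::comm_ring_1) \<Rightarrow> (nat \<Rightarrow> 'a) \<Rightarrow> (nat \<Rightarrow> 'a) \<Rightarrow> (nat \<Rightarrow> 'a)" where
  "bil n F v w = (\<lambda>k. if k < n then (\<Sum>i<n. \<Sum>j<n. v i * w j * F i j k) else 0)"

text \<open>Sweedler sum: for b = sum_j b j x_j, with \<Delta>(x_j) = sum_{j1+j2=j} x_j1 \<otimes> x_j2,
  sw n b G = G(b_(1), b_(2)) for G bilinear, i.e. sum_j b j * sum_{j1<=j} G (x_j1) (x_(j-j1)).\<close>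
definition sw :: "nat \<Rightarrow> (nat \<Rightarrow> 'a::comm_ring_1) \<Rightarrow> ((nat \<Rightarrow> 'a) \<Rightarrow> (nat \<Rightarrow> 'a) \<Rightarrow> (nat \<Rightarrow> 'a)) \<Rightarrow> (nat \<Rightarrow> 'a)" where
  "sw n b G = (\<lambda>k. \<Sum>j<n. b j * (\<Sum>j1\<le>j. G (bas j1) (bas (j - j1)) k))"

definition eps :: "(nat \<Rightarrow> 'a::zero) \<Rightarrow> 'a" where
  "eps v = v 0"

text \<open>Comultiplication of C as an element of C \<otimes> C (coefficient of x_a \<otimes> x_b).\<close>
definition comul :: "nat \<Rightarrow> (nat \<Rightarrow> 'a::zero) \<Rightarrow> nat \<Rightarrow> nat \<Rightarrow> 'a" where
  "comul n v = (\<lambda>a b. if a < n \<and> b < n \<and> a + b < n then v (a + b) else 0)"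

definition tens :: "(nat \<Rightarrow> 'a::times) \<Rightarrow> (nat \<Rightarrow> 'a) \<Rightarrow> nat \<Rightarrow> nat \<Rightarrow> 'a" where
  "tens v w = (\<lambda>a b. v a * w b)"

text \<open>F : C \<otimes> C \<rightarrow> C is a coalgebra morphism (C \<otimes> C with the tensor product coalgebra structure:
  \<Delta>(x_i \<otimes> x_j) = sum (x_i1 \<otimes> x_j1) \<otimes> (x_i2 \<otimes> x_j2), \<epsilon>(x_i \<otimes> x_j) = \<epsilon>(x_i)\<epsilon>(x_j)); checked on the basis.\<close>
definition coalg_morph :: "nat \<Rightarrow> (nat \<Rightarrow> nat \<Rightarrow> nat \<Rightarrow> 'a::comm_ring_1) \<Rightarrow> bool" where
  "coalg_morph n F \<longleftrightarrow>
    (\<forall>i<n. \<forall>j<n.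
       eps (bil n F (bas i) (bas j)) = eps (bas i) * eps (bas j) \<and>
       comul n (bil n F (bas i) (bas j)) =
         (\<lambda>a b. \<Sum>i1\<le>i. \<Sum>j1\<le>j.
            tens (bil n F (bas i1) (bas j1)) (bil n F (bas (i - i1)) (bas (j - j1))) a b))"

text \<open>Regular q-magma coalgebra (C, P, D): P, D coalgebra morphisms and there are coalgebra
  morphisms U (a \<otimes> b \<mapsto> a^b) and L (a \<otimes> b \<mapsto> a_b) with
  a^{b(1)} . b(2) = (a . b(1))^{b(2)} = \<epsilon>(b) a and (a : b(2))_{b(1)} = a_{b(2)} : b(1) = \<epsilon>(b) a.\<close>
definition regular_q_magma :: "nat \<Rightarrow> (nat \<Rightarrow> nat \<Rightarrow> nat \<Rightarrow> 'a::comm_ring_1) \<Rightarrow> (nat \<Rightarrow> nat \<Rightarrow> nat \<Rightarrow> 'a) \<Rightarrow> bool" where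
  "regular_q_magma n P D \<longleftrightarrow> coalg_morph n P \<and> coalg_morph n D \<and>
    (\<exists>U L. coalg_morph n U \<and> coalg_morph n L \<and>
      (\<forall>a\<in>Cvec n. \<forall>b\<in>Cvec n.
         sw n b (\<lambda>b1 b2. bil n P (bil n U a b1) b2) = (\<lambda>k. eps b * a k) \<and>
         sw n b (\<lambda>b1 b2. bil n U (bil n P a b1) b2) = (\<lambda>k. eps b * a k) \<and>
         sw n b (\<lambda>b1 b2. bil n L (bil n D a b2) b1) = (\<lambda>k. eps b * a k) \<and>
         sw n b (\<lambda>b1 b2. bil n D (bil n L a b2) b1) = (\<lambda>k. eps b * a k)))"

definition regular_q_cycle :: "nat \<Rightarrow> (nat \<Rightarrow> nat \<Rightarrow> nat \<Rightarrow> 'a::comm_ring_1) \<Rightarrow> (nat \<Rightarrow> nat \<Rightarrow> nat \<Rightarrow> 'a) \<Rightarrow> bool" where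
  "regular_q_cycle n P D \<longleftrightarrow> regular_q_magma n P D \<and>
    (\<forall>a\<in>Cvec n. \<forall>b\<in>Cvec n. \<forall>c\<in>Cvec n.
       sw n b (\<lambda>b1 b2. bil n P (bil n P a b1) (bil n D c b2)) =
         sw n c (\<lambda>c1 c2. bil n P (bil n P a c2) (bil n P b c1)) \<and>
       sw n b (\<lambda>b1 b2. bil n D (bil n P a b1) (bil n P c b2)) =
         sw n c (\<lambda>c1 c2. bil n P (bil n D a c2) (bil n D b c1)) \<and>
       sw n b (\<lambda>b1 b2. bil n D (bil n D a b1) (bil n D c b2)) =
         sw n c (\<lambda>c1 c2. bil n D (bil n D a c2) (bil n P b c1)))"

end

theory Submission
  imports Defs
begin

declare One_nat_def [simp del]

lemma sum_single:
  assumes "finite A" "\<And>x. x \<in> A \<Longrightarrow> x \<noteq> a \<Longrightarrow> f x = 0"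
  shows "sum f A = (if a \<in> A then f a else 0)"
proof (cases "a \<in> A")
  case True
  then show ?thesis using assms by (simp add: sum.remove sum.neutral)
next
  case False
  then show ?thesis using assms by (auto intro: sum.neutral)
qed

lemma bil_apply: "k < n \<Longrightarrow> bil n F v w k = (\<Sum>i<n. \<Sum>j<n. v i * w j * F i j k)"
  by (simp add: bil_def)

lemma bas_mult: "bas i k * x = (if k = i then x else (0::'a::comm_ring_1))"
  by (simp add: bas_def)

lemma sum_if_const: "(\<Sum>x\<in>A. if c then f x else 0) = (if c then sum f A else 0)"
  by simp

lemma bas_mult2: "bas i a * bas j b * x = (if a = i then if b = j then x else 0 else (0::'a::comm_ring_1))"
  by (simp add: bas_def)

lemma bil_bas: "i < n \<Longrightarrow> j < n \<Longrightarrow> bil n F (bas i) (bas j) = (\<lambda>k. if k < n then F i j k else 0)"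
  by (rule ext) (simp add: bil_def bas_mult2 sum_if_const sum.delta if_distrib[where f="\<lambda>x. x * _"] cong: if_cong)

lemma sw_bas: "j < n \<Longrightarrow> sw n (bas j) G k = (\<Sum>j1\<le>j. G (bas j1) (bas (j - j1)) k)"
  by (simp add: sw_def bas_mult sum.delta)

lemma bas_Cvec: "bas i \<in> Cvec n" if "i < n"
  using that by (simp add: Cvec_def bas_def)

lemma sum_atMost1: "(\<Sum>j\<le>(1::nat). f j) = f 0 + f 1"
  by (simp add: atMost_Suc One_nat_def add.commute)

lemma sum_single_in:
  assumes "finite A" "a \<in> A" "\<And>x. x \<in> A \<Longrightarrow> x \<noteq> a \<Longrightarrow> f x = 0"
  shows "sum f A = f a"
  using sum_single[of A a f] assms by simp

lemma sum_two:
  assumes "finite A" "a \<in> A" "b \<in> A" "a \<noteq> b" "\<And>x. x \<in> A \<Longrightarrow> x \<noteq> a \<Longrightarrow> x \<noteq> b \<Longrightarrow> f x = 0"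
  shows "sum f A = f a + f b"
proof -
  have "sum f A = f a + sum f (A - {a})" using assms by (simp add: sum.remove)
  also have "sum f (A - {a}) = f b" using assms by (subst sum_single) auto
  finally show ?thesis .
qed

definition cv :: "(nat \<Rightarrow> nat \<Rightarrow> nat \<Rightarrow> 'a::comm_ring_1) \<Rightarrow> nat \<Rightarrow> nat \<Rightarrow> nat \<Rightarrow> 'a" where
  "cv F s i j = (\<Sum>i1\<le>i. \<Sum>j1\<le>j. F i1 j1 1 * F (i - i1) (j - j1) s)"

locale cm =
  fixes n :: nat and F :: "nat \<Rightarrow> nat \<Rightarrow> nat \<Rightarrow> 'a::field_char_0"
  assumes cm: "coalg_morph n F" and n2: "2 \<le> n"
begin

lemma CM0: assumes "i < n" "j < n" shows "F i j 0 = (if i = 0 \<and> j = 0 then 1 else 0)"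
proof -
  have "eps (bil n F (bas i) (bas j)) = eps (bas i) * eps (bas j)"
    using cm assms unfolding coalg_morph_def by blast
  moreover have "0 < n" using n2 by simp
  ultimately have "F i j 0 = bas i 0 * bas j 0" using assms by (simp only: bil_bas eps_def) simp
  then show ?thesis by (simp add: bas_def)
qed

lemma CMgen:
  assumes "i < n" "j < n" "a < n" "b < n"
  shows "(if a + b < n then F i j (a + b) else 0) = (\<Sum>i1\<le>i. \<Sum>j1\<le>j. F i1 j1 a * F (i - i1) (j - j1) b)"
proof -
  have "comul n (bil n F (bas i) (bas j)) = (\<lambda>a b. \<Sum>i1\<le>i. \<Sum>j1\<le>j.
            tens (bil n F (bas i1) (bas j1)) (bil n F (bas (i - i1)) (bas (j - j1))) a b)"
    using cm assms unfolding coalg_morph_def by blast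
  then have "comul n (bil n F (bas i) (bas j)) a b = (\<Sum>i1\<le>i. \<Sum>j1\<le>j.
            tens (bil n F (bas i1) (bas j1)) (bil n F (bas (i - i1)) (bas (j - j1))) a b)"
    by simp
  also have "\<dots> = (\<Sum>i1\<le>i. \<Sum>j1\<le>j. F i1 j1 a * F (i - i1) (j - j1) b)"
    using assms by (intro sum.cong refl) (simp add: tens_def bil_bas)
  finally have "comul n (bil n F (bas i) (bas j)) a b = (\<Sum>i1\<le>i. \<Sum>j1\<le>j. F i1 j1 a * F (i - i1) (j - j1) b)" .
  moreover have "comul n (bil n F (bas i) (bas j)) a b = (if a + b < n then F i j (a + b) else 0)"
    using assms by (simp add: comul_def bil_bas)
  ultimately show ?thesis by simp
qed

lemma CMrec: "i < n \<Longrightarrow> j < n \<Longrightarrow> Suc s < n \<Longrightarrow> F i j (Suc s) = cv F s i j"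
  using CMgen[of i j 1 s] by (simp add: cv_def Suc_eq_plus1_left)

lemma CMtop: "i < n \<Longrightarrow> j < n \<Longrightarrow> cv F (n - 1) i j = 0"
  using CMgen[of i j 1 "n - 1"] n2 by (simp add: cv_def)

lemma F00pow: "t < n \<Longrightarrow> F 0 0 t = (F 0 0 1) ^ t"
proof (induction t)
  case 0
  then show ?case by (simp add: CM0)
next
  case (Suc t)
  then have "F 0 0 (Suc t) = cv F t 0 0" using n2 CMrec[of 0 0 t] by simp
  also have "\<dots> = F 0 0 1 * F 0 0 t" by (simp add: cv_def)
  finally show ?case using Suc by simp
qed

lemma f00: "F 0 0 1 = 0"
proof -
  have "cv F (n - 1) 0 0 = 0" using CMtop n2 by simp
  then have "F 0 0 1 * F 0 0 (n - 1) = 0" by (simp add: cv_def)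
  moreover have "F 0 0 (n - 1) = F 0 0 1 ^ (n - 1)" using F00pow[of "n - 1"] n2 by simp
  ultimately have "F 0 0 1 * F 0 0 1 ^ (n - 1) = 0" by simp
  then have "F 0 0 1 ^ Suc (n - 1) = 0" by (simp only: power_Suc)
  then show ?thesis using power_eq_0_iff by blast
qed

lemma F00: "0 < t \<Longrightarrow> t < n \<Longrightarrow> F 0 0 t = 0"
  using F00pow[of t] f00 by simp

lemma F10: "s < n \<Longrightarrow> F 1 0 s = (if s = 1 then F 1 0 1 else 0)"
proof (cases s)
  case 0
  then show ?thesis using n2 by (simp add: CM0)
next
  case (Suc t)
  assume "s < n"
  show ?thesis
  proof (cases "t = 0")
    case True then show ?thesis using Suc by (simp add: One_nat_def)
  next
    case False
    have "F 1 0 s = cv F t 1 0" using Suc \<open>s < n\<close> n2 CMrec[of 1 0 t] by simp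
    also have "\<dots> = F 0 0 1 * F 1 0 t + F 1 0 1 * F 0 0 t" by (simp add: cv_def sum_atMost1)
    also have "\<dots> = 0" using f00 F00[of t] False Suc \<open>s < n\<close> by simp
    finally show ?thesis using Suc False by simp
  qed
qed



context
  fixes s :: nat
  assumes s1: "1 \<le> s" and sn: "s < n" and h: "\<And>w. w < s \<Longrightarrow> F 0 w 1 = 0"
begin

lemma cvV:
  assumes tn: "t < n"
    and V1: "\<And>u v. u < n \<Longrightarrow> v < n \<Longrightarrow> u < t \<Longrightarrow> v < s \<Longrightarrow> F u v t = 0"
    and V2: "\<And>u v. u < n \<Longrightarrow> v < n \<Longrightarrow> u + 1 < t \<Longrightarrow> v \<le> s \<Longrightarrow> F u v t = 0"
    and V3: "F t 0 t = F 1 0 1 ^ t"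
    and V4: "1 \<le> t \<Longrightarrow> F (t - 1) s t = of_nat t * F 1 0 1 ^ (t - 1) * F 0 s 1"
  shows "cv F t t s = of_nat (t + 1) * F 1 0 1 ^ t * F 0 s 1"
proof -
  define g where "g i1 = (\<Sum>j1\<le>s. F i1 j1 1 * F (t - i1) (s - j1) t)" for i1
  have cvg: "cv F t t s = (\<Sum>i1\<le>t. g i1)" by (simp add: cv_def g_def)
  have g0: "g 0 = F 0 s 1 * F 1 0 1 ^ t"
  proof -
    have "g 0 = F 0 s 1 * F (t - 0) (s - s) t"
      unfolding g_def by (subst sum_single[where a = s]) (auto simp: h)
    then show ?thesis using V3 by simp
  qed
  have g1: "g 1 = F 1 0 1 * F (t - 1) s t" if "1 \<le> t"
  proof -
    have "g 1 = F 1 0 1 * F (t - 1) (s - 0) t"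
      unfolding g_def using tn sn that by (subst sum_single[where a = 0]) (auto simp: V1)
    then show ?thesis by simp
  qed
  have g2: "g i1 = 0" if "2 \<le> i1" "i1 \<le> t" for i1
    unfolding g_def using that tn sn by (intro sum.neutral ballI) (simp add: V2)
  show ?thesis
  proof (cases "t = 0")
    case True
    then show ?thesis using cvg g0 by simp
  next
    case False
    then have "cv F t t s = g 0 + g 1" unfolding cvg
      by (intro sum_two) (auto simp: g2)
    also have "\<dots> = F 0 s 1 * F 1 0 1 ^ t + F 1 0 1 * (of_nat t * F 1 0 1 ^ (t - 1) * F 0 s 1)"
      using g0 g1 V4 False by simp
    also have "F 1 0 1 * F 1 0 1 ^ (t - 1) = F 1 0 1 ^ t" using False
      by (metis power_eq_if mult.commute)
    then have "F 1 0 1 * (of_nat t * F 1 0 1 ^ (t - 1) * F 0 s 1) = of_nat t * F 1 0 1 ^ t * F 0 s 1"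
      by (metis mult.assoc mult.left_commute)
    finally show ?thesis by (simp add: algebra_simps)
  qed
qed

lemma Vall:
  "t < n \<Longrightarrow> (\<forall>u v. u < n \<longrightarrow> v < n \<longrightarrow> u < t \<longrightarrow> v < s \<longrightarrow> F u v t = 0) \<and>
     (\<forall>u v. u < n \<longrightarrow> v < n \<longrightarrow> u + 1 < t \<longrightarrow> v \<le> s \<longrightarrow> F u v t = 0) \<and>
     F t 0 t = F 1 0 1 ^ t \<and>
     (1 \<le> t \<longrightarrow> F (t - 1) s t = of_nat t * F 1 0 1 ^ (t - 1) * F 0 s 1)"
proof (induction t)
  case 0
  then show ?case by (simp add: CM0)
next
  case (Suc t)
  then have tn: "t < n" by simp
  from Suc.IH[OF tn] have
    V1: "\<And>u v. u < n \<Longrightarrow> v < n \<Longrightarrow> u < t \<Longrightarrow> v < s \<Longrightarrow> F u v t = 0" and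
    V2: "\<And>u v. u < n \<Longrightarrow> v < n \<Longrightarrow> u + 1 < t \<Longrightarrow> v \<le> s \<Longrightarrow> F u v t = 0" and
    V3: "F t 0 t = F 1 0 1 ^ t" and
    V4: "1 \<le> t \<Longrightarrow> F (t - 1) s t = of_nat t * F 1 0 1 ^ (t - 1) * F 0 s 1"
    by auto
  have W1: "F u v (Suc t) = 0" if "u < n" "v < n" "u < Suc t" "v < s" for u v
  proof -
    have "F u v (Suc t) = cv F t u v" using CMrec[of u v t] that Suc.prems by simp
    also have "\<dots> = 0" unfolding cv_def
    proof (intro sum.neutral ballI)
      fix i1 j1 assume "i1 \<in> {..u}" "j1 \<in> {..v}"
      then show "F i1 j1 1 * F (u - i1) (v - j1) t = 0"
        using that h V1 by (cases "i1 = 0") auto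
    qed
    finally show ?thesis .
  qed
  have W2: "F u v (Suc t) = 0" if "u < n" "v < n" "u + 1 < Suc t" "v \<le> s" for u v
  proof -
    have "F u v (Suc t) = cv F t u v" using CMrec[of u v t] that Suc.prems by simp
    also have "\<dots> = 0" unfolding cv_def
    proof (intro sum.neutral ballI)
      fix i1 j1 assume a: "i1 \<in> {..u}" "j1 \<in> {..v}"
      show "F i1 j1 1 * F (u - i1) (v - j1) t = 0"
      proof (cases "i1 = 0")
        case True
        then show ?thesis
        proof (cases "j1 < s")
          case True
          then show ?thesis using h \<open>i1 = 0\<close> by simp
        next
          case False
          then have "v - j1 = 0" using a that by auto
          then show ?thesis using V1[of u 0] that s1 \<open>i1 = 0\<close> by simp
        qed
      next
        case False
        then show ?thesis using V2[of "u - i1" "v - j1"] a that by simp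
      qed
    qed
    finally show ?thesis .
  qed
  have W3: "F (Suc t) 0 (Suc t) = F 1 0 1 ^ Suc t"
  proof -
    have "F (Suc t) 0 (Suc t) = cv F t (Suc t) 0" using CMrec[of "Suc t" 0 t] Suc.prems by simp
    also have "\<dots> = (\<Sum>i1\<le>Suc t. F i1 0 1 * F (Suc t - i1) 0 t)" by (simp add: cv_def)
    also have "\<dots> = F 1 0 1 * F (Suc t - 1) 0 t"
    proof (rule sum_single_in)
      fix x assume "x \<in> {..Suc t}" "x \<noteq> 1"
      then show "F x 0 1 * F (Suc t - x) 0 t = 0" using Suc.prems s1 by (cases "x = 0") (auto simp: f00 V1)
    qed auto
    finally show ?thesis using V3 by simp
  qed
  have W4: "F t s (Suc t) = of_nat (Suc t) * F 1 0 1 ^ t * F 0 s 1"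
  proof -
    have "F t s (Suc t) = cv F t t s" using CMrec[of t s t] Suc.prems sn by simp
    also have "\<dots> = of_nat (t + 1) * F 1 0 1 ^ t * F 0 s 1"
      by (rule cvV[OF tn V1 V2 V3 V4])
    finally show ?thesis by simp
  qed
  show ?case using W1 W2 W3 W4 by auto
qed

lemma f0v_step: assumes "F 1 0 1 \<noteq> 0" shows "F 0 s 1 = 0"
proof -
  have tn: "n - 1 < n" using n2 by simp
  note V = Vall[OF tn]
  have "cv F (n - 1) (n - 1) s = of_nat (n - 1 + 1) * F 1 0 1 ^ (n - 1) * F 0 s 1"
    by (rule cvV[OF tn]) (use V in auto)
  moreover have "cv F (n - 1) (n - 1) s = 0" using CMtop tn sn by simp
  ultimately have "of_nat n * F 1 0 1 ^ (n - 1) * F 0 s 1 = 0" using n2 by simp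
  then show ?thesis using assms n2 by simp
qed

end

lemma f0v: assumes f10: "F 1 0 1 \<noteq> 0" shows "v < n \<Longrightarrow> F 0 v 1 = 0"
proof (induction v rule: less_induct)
  case (less v)
  show ?case
  proof (cases "v = 0")
    case True then show ?thesis using f00 by simp
  next
    case False
    then show ?thesis using f0v_step[of v] less f10 by simp
  qed
qed


context
  assumes h0: "\<And>v. v < n \<Longrightarrow> F 0 v 1 = 0"
begin

lemma F1: "t < n \<Longrightarrow> u < n \<Longrightarrow> v < n \<Longrightarrow> u < t \<Longrightarrow> F u v t = 0"
proof (induction t arbitrary: u v)
  case 0 then show ?case by simp
next
  case (Suc t)
  have "F u v (Suc t) = cv F t u v" using CMrec[of u v t] Suc.prems by simp
  also have "\<dots> = 0" unfolding cv_def
  proof (intro sum.neutral ballI)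
    fix i1 j1 assume "i1 \<in> {..u}" "j1 \<in> {..v}"
    then show "F i1 j1 1 * F (u - i1) (v - j1) t = 0"
      using Suc.prems Suc.IH[of "u - i1" "v - j1"] h0[of j1] by (cases "i1 = 0") auto
  qed
  finally show ?case .
qed

lemma row1: "j < n \<Longrightarrow> s < n \<Longrightarrow> F 1 j s = (if s = 1 then F 1 j 1 else 0)"
  using CM0[of 1 j] F1[of s 1 j] n2 by (cases "s = 0"; cases "s = 1") auto

lemma row0: "v < n \<Longrightarrow> t < n \<Longrightarrow> F 0 v t = (if t = 0 then (if v = 0 then 1 else 0) else 0)"
  using CM0[of 0 v] F1[of t 0 v] n2 by (cases "t = 0") auto

lemma col1: "j < n \<Longrightarrow> (\<Sum>s<n. F 1 j s * X s) = F 1 j 1 * X 1"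
  by (rule sum_single_in) (use n2 row1 in auto)

lemma col0: "v < n \<Longrightarrow> (\<Sum>t<n. F 0 v t * X t) = (if v = 0 then X 0 else 0)"
proof -
  assume v: "v < n"
  have "(\<Sum>t<n. F 0 v t * X t) = F 0 v 0 * X 0"
    by (rule sum_single_in) (use n2 row0 v in auto)
  then show ?thesis using row0[of v 0] v n2 by simp
qed

lemma Sid:
  assumes q1: "q 1 \<noteq> 0" and eq: "\<And>m. m < n \<Longrightarrow> (\<Sum>t<n. F m 0 t * q t) = q m"
  shows "u < n \<Longrightarrow> F u 0 1 = (if u = 1 then 1 else 0)"
proof (induction u rule: less_induct)
  case (less m)
  show ?case
  proof (cases "m = 0")
    case True then show ?thesis using f00 by simp
  next
    case m0: False
    show ?thesis
    proof (cases "m = 1")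
      case True
      have "(\<Sum>t<n. F 1 0 t * q t) = F 1 0 1 * q 1"
      proof (rule sum_single_in)
        fix t assume "t \<in> {..<n}" "t \<noteq> 1"
        then show "F 1 0 t * q t = 0" using F10[of t] by simp
      qed (use n2 in auto)
      then have "F 1 0 1 * q 1 = q 1" using eq[of 1] n2 by simp
      then show ?thesis using True q1 by simp
    next
      case m1: False
      then have m2: "2 \<le> m" using m0 by simp
      have IHm: "F u 0 1 = (if u = 1 then 1 else 0)" if "u < m" for u
        using less that by simp
      have Pw: "1 \<le> t \<Longrightarrow> t < n \<Longrightarrow> \<forall>u. u < n \<longrightarrow> u < m + t - 1 \<longrightarrow> F u 0 t = (if u = t then 1 else 0)" for t
      proof (induction t)
        case 0 then show ?case by simp
      next
        case (Suc t)
        show ?case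
        proof (cases "t = 0")
          case True then show ?thesis using IHm by (auto simp: One_nat_def[symmetric])
        next
          case False
          then have t1: "1 \<le> t" by simp
          have IHt: "F u 0 t = (if u = t then 1 else 0)" if "u < n" "u < m + t - 1" for u
            using Suc.IH t1 Suc.prems that by simp
          show ?thesis
          proof (intro allI impI)
            fix u assume u: "u < n" "u < m + Suc t - 1"
            have "F u 0 (Suc t) = cv F t u 0" using CMrec[of u 0 t] u Suc.prems n2 by simp
            also have "\<dots> = (\<Sum>i1\<le>u. F i1 0 1 * F (u - i1) 0 t)" by (simp add: cv_def)
            also have "\<dots> = (if u = Suc t then 1 else 0)"
            proof (cases "u = 0")
              case True then show ?thesis using f00 by simp
            next
              case u0: False
              have "(\<Sum>i1\<le>u. F i1 0 1 * F (u - i1) 0 t) = F 1 0 1 * F (u - 1) 0 t"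
              proof (rule sum_single_in)
                fix x assume x: "x \<in> {..u}" "x \<noteq> 1"
                show "F x 0 1 * F (u - x) 0 t = 0"
                proof (cases "x < m")
                  case True then show ?thesis using IHm[of x] x by simp
                next
                  case False then have "u - x < t" using u t1 by arith
                  then show ?thesis using F1[of t "u - x" 0] Suc.prems u by simp
                qed
              qed (use u0 in auto)
              also have "\<dots> = (if u = Suc t then 1 else 0)"
                using IHm[of 1] m2 IHt[of "u - 1"] u u0 by auto
              finally show ?thesis .
            qed
            finally show "F u 0 (Suc t) = (if u = Suc t then 1 else 0)" .
          qed
        qed
      qed
      have "(\<Sum>t<n. F m 0 t * q t) = F m 0 1 * q 1 + F m 0 m * q m"
      proof (rule sum_two[where a = 1 and b = m])
        fix t assume t: "t \<in> {..<n}" "t \<noteq> 1" "t \<noteq> m"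
        show "F m 0 t * q t = 0"
        proof (cases "t = 0")
          case True then show ?thesis using CM0[of m 0] m0 less.prems n2 by simp
        next
          case False then show ?thesis using Pw[of t] t less.prems by simp
        qed
      qed (use less.prems m1 n2 in auto)
      moreover have "F m 0 m = 1" using Pw[of m] m2 less.prems by simp
      ultimately have "F m 0 1 * q 1 + q m = q m" using eq[of m] less.prems by simp
      then show ?thesis using q1 m1 by simp
    qed
  qed
qed

context
  assumes hu0: "\<And>u. u < n \<Longrightarrow> F u 0 1 = (if u = 1 then 1 else 0)"
begin

lemma F0: "t < n \<Longrightarrow> u < n \<Longrightarrow> F u 0 t = (if u = t then 1 else 0)"
proof (induction t arbitrary: u)
  case 0 then show ?case by (simp add: CM0)
next
  case (Suc t)
  have "F u 0 (Suc t) = cv F t u 0" using CMrec[of u 0 t] Suc.prems n2 by simp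
  also have "\<dots> = (\<Sum>i1\<le>u. F i1 0 1 * F (u - i1) 0 t)" by (simp add: cv_def)
  also have "\<dots> = (if u = Suc t then 1 else 0)"
  proof (cases "u = 0")
    case True then show ?thesis using f00 by simp
  next
    case u0: False
    have "(\<Sum>i1\<le>u. F i1 0 1 * F (u - i1) 0 t) = F 1 0 1 * F (u - 1) 0 t"
    proof (rule sum_single_in)
      fix x assume x: "x \<in> {..u}" "x \<noteq> 1"
      then show "F x 0 1 * F (u - x) 0 t = 0" using hu0[of x] Suc.prems by simp
    qed (use u0 in auto)
    also have "\<dots> = (if u = Suc t then 1 else 0)"
      using hu0[of 1] n2 Suc.IH[of "u - 1"] Suc.prems u0 by auto
    finally show ?thesis .
  qed
  finally show ?case .
qed

lemma colS: "u < n \<Longrightarrow> (\<Sum>t<n. F u 0 t * X t) = X u"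
proof -
  assume u: "u < n"
  have "(\<Sum>t<n. F u 0 t * X t) = F u 0 u * X u"
    by (rule sum_single_in) (use u F0 in auto)
  then show ?thesis using F0[of u u] u by simp
qed

lemma G1: "t < n \<Longrightarrow> F t 1 t = of_nat t * F 1 1 1"
proof (induction t)
  case 0 then show ?case using n2 by (simp add: CM0)
next
  case (Suc t)
  have "F (Suc t) 1 (Suc t) = cv F t (Suc t) 1" using CMrec[of "Suc t" 1 t] Suc.prems n2 by simp
  also have "\<dots> = (\<Sum>i1\<le>Suc t. F i1 0 1 * F (Suc t - i1) 1 t) + (\<Sum>i1\<le>Suc t. F i1 1 1 * F (Suc t - i1) 0 t)"
    by (simp add: cv_def sum_atMost1 sum.distrib)
  also have "(\<Sum>i1\<le>Suc t. F i1 0 1 * F (Suc t - i1) 1 t) = F 1 0 1 * F (Suc t - 1) 1 t"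
  proof (rule sum_single_in)
    fix x assume x: "x \<in> {..Suc t}" "x \<noteq> 1"
    then show "F x 0 1 * F (Suc t - x) 1 t = 0" using hu0[of x] Suc.prems by simp
  qed auto
  also have "(\<Sum>i1\<le>Suc t. F i1 1 1 * F (Suc t - i1) 0 t) = F 1 1 1 * F (Suc t - 1) 0 t"
  proof (rule sum_single_in)
    fix x assume x: "x \<in> {..Suc t}" "x \<noteq> 1"
    then show "F x 1 1 * F (Suc t - x) 0 t = 0" using F0[of t "Suc t - x"] Suc.prems by auto
  qed auto
  finally show ?case using hu0[of 1] F0[of t t] Suc n2 by (simp add: algebra_simps)
qed

end

end

end


lemma if_mult_r: "(if c then x else 0) * (y::'a::comm_ring_1) = (if c then x * y else 0)" by simp
lemma mult_if_r: "(y::'a::comm_ring_1) * (if c then x else 0) = (if c then y * x else 0)" by simp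

lemma sum_atMost_rev: "(\<Sum>k\<le>(m::nat). g (m - k)) = (\<Sum>k\<le>m. g k)"
  by (rule sum.reindex_bij_witness[where i="\<lambda>k. m - k" and j="\<lambda>k. m - k"]) auto

lemma bil_bb: assumes "i < n" "j < n" "i' < n" "j' < n" "l < n"
  shows "bil n F (bil n G (bas i) (bas j)) (bil n H (bas i') (bas j')) l = (\<Sum>s<n. \<Sum>t<n. G i j s * H i' j' t * F s t l)"
  using assms by (simp add: bil_apply bil_bas)

lemma bas_mid: "x * bas j t * y = (if t = j then x * y else (0::'a::comm_ring_1))"
  by (simp add: bas_def)

lemma bil_b0: assumes "i < n" "j < n" "j' < n" "l < n"
  shows "bil n F (bil n G (bas i) (bas j)) (bas j') l = (\<Sum>s<n. G i j s * F s j' l)"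
  using assms by (simp add: bil_apply bil_bas bas_mid)


locale qc =
  fixes n :: nat and P D :: "nat \<Rightarrow> nat \<Rightarrow> nat \<Rightarrow> 'a::field_char_0"
  assumes n2: "2 \<le> n" and reg: "regular_q_cycle n P D" and p11: "P 1 1 1 \<noteq> 0"
begin

lemma mag: "regular_q_magma n P D" using reg by (simp add: regular_q_cycle_def)
lemma cmP: "cm n P" using mag n2 by (simp add: regular_q_magma_def cm_def)
lemma cmD: "cm n D" using mag n2 by (simp add: regular_q_magma_def cm_def)

lemma cyc1: assumes "i < n" "j < n" "k < n" "l < n"
  shows "(\<Sum>j1\<le>j. \<Sum>s<n. \<Sum>t<n. P i j1 s * D k (j - j1) t * P s t l) =
         (\<Sum>k1\<le>k. \<Sum>s<n. \<Sum>t<n. P i (k - k1) s * P j k1 t * P s t l)"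
proof -
  have "sw n (bas j) (\<lambda>b1 b2. bil n P (bil n P (bas i) b1) (bil n D (bas k) b2)) =
        sw n (bas k) (\<lambda>c1 c2. bil n P (bil n P (bas i) c2) (bil n P (bas j) c1))"
    using reg assms bas_Cvec unfolding regular_q_cycle_def by blast
  then have "sw n (bas j) (\<lambda>b1 b2. bil n P (bil n P (bas i) b1) (bil n D (bas k) b2)) l =
        sw n (bas k) (\<lambda>c1 c2. bil n P (bil n P (bas i) c2) (bil n P (bas j) c1)) l" by simp
  then show ?thesis using assms by (simp add: sw_bas bil_bb)
qed

lemma cyc3: assumes "i < n" "j < n" "k < n" "l < n"
  shows "(\<Sum>j1\<le>j. \<Sum>s<n. \<Sum>t<n. D i j1 s * D k (j - j1) t * D s t l) =
         (\<Sum>k1\<le>k. \<Sum>s<n. \<Sum>t<n. D i (k - k1) s * P j k1 t * D s t l)"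
proof -
  have "sw n (bas j) (\<lambda>b1 b2. bil n D (bil n D (bas i) b1) (bil n D (bas k) b2)) =
        sw n (bas k) (\<lambda>c1 c2. bil n D (bil n D (bas i) c2) (bil n P (bas j) c1))"
    using reg assms bas_Cvec unfolding regular_q_cycle_def by blast
  then have "sw n (bas j) (\<lambda>b1 b2. bil n D (bil n D (bas i) b1) (bil n D (bas k) b2)) l =
        sw n (bas k) (\<lambda>c1 c2. bil n D (bil n D (bas i) c2) (bil n P (bas j) c1)) l" by simp
  then show ?thesis using assms by (simp add: sw_bas bil_bb)
qed

lemma p10_d10: "P 1 0 1 \<noteq> 0 \<and> D 1 0 1 \<noteq> 0"
proof -
  obtain U L where U: "coalg_morph n U" and L: "coalg_morph n L" and
    H: "\<forall>a\<in>Cvec n. \<forall>b\<in>Cvec n.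
         sw n b (\<lambda>b1 b2. bil n P (bil n U a b1) b2) = (\<lambda>k. eps b * a k) \<and>
         sw n b (\<lambda>b1 b2. bil n U (bil n P a b1) b2) = (\<lambda>k. eps b * a k) \<and>
         sw n b (\<lambda>b1 b2. bil n L (bil n D a b2) b1) = (\<lambda>k. eps b * a k) \<and>
         sw n b (\<lambda>b1 b2. bil n D (bil n L a b2) b1) = (\<lambda>k. eps b * a k)"
    using mag unfolding regular_q_magma_def by blast
  have n1: "1 < n" "0 < n" using n2 by auto
  have c0: "bas 0 \<in> Cvec n" and c1: "bas 1 \<in> Cvec n" using n1 bas_Cvec[of 0 n] bas_Cvec[of 1 n] by auto
  have e1: "sw n (bas 0) (\<lambda>b1 b2. bil n P (bil n U (bas 1) b1) b2) 1 = eps (bas 0) * bas 1 1"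
    using H c0 c1 by metis
  have e3: "sw n (bas 0) (\<lambda>b1 b2. bil n L (bil n D (bas 1) b2) b1) 1 = eps (bas 0) * bas 1 1"
    using H c0 c1 by metis
  have cU: "cm n U" and cL: "cm n L" using U L n2 by (auto simp: cm_def)
  have epsv: "eps (bas 0) * bas 1 1 = (1::'a)" by (simp add: eps_def bas_def)
  have a1: "sw n (bas 0) (\<lambda>b1 b2. bil n P (bil n U (bas 1) b1) b2) 1 = (\<Sum>s<n. U 1 0 s * P s 0 1)"
    using n1 by (simp add: sw_bas bil_b0)
  have a2: "(\<Sum>s<n. U 1 0 s * P s 0 1) = U 1 0 1 * P 1 0 1"
    by (rule sum_single_in) (use n1 cm.F10[OF cU] in auto)
  have a3: "sw n (bas 0) (\<lambda>b1 b2. bil n L (bil n D (bas 1) b2) b1) 1 = (\<Sum>s<n. D 1 0 s * L s 0 1)"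
    using n1 by (simp add: sw_bas bil_b0)
  have a4: "(\<Sum>s<n. D 1 0 s * L s 0 1) = D 1 0 1 * L 1 0 1"
    by (rule sum_single_in) (use n1 cm.F10[OF cmD] in auto)
  have "U 1 0 1 * P 1 0 1 = 1" using e1 a1 a2 epsv by simp
  moreover have "D 1 0 1 * L 1 0 1 = 1" using e3 a3 a4 epsv by simp
  ultimately show ?thesis by auto
qed

lemma h0P: "v < n \<Longrightarrow> P 0 v 1 = 0" using cm.f0v[OF cmP] p10_d10 by blast
lemma h0D: "v < n \<Longrightarrow> D 0 v 1 = 0" using cm.f0v[OF cmD] p10_d10 by blast

lemmas rowP1 = cm.row1[OF cmP h0P] and rowP0 = cm.row0[OF cmP h0P]
lemmas rowD1 = cm.row1[OF cmD h0D] and rowD0 = cm.row0[OF cmD h0D]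
lemmas F1P = cm.F1[OF cmP h0P] and F1D = cm.F1[OF cmD h0D]

lemmas col1P = cm.col1[OF cmP h0P] and col0P = cm.col0[OF cmP h0P]
lemmas col1D = cm.col1[OF cmD h0D] and col0D = cm.col0[OF cmD h0D]

lemma SP: "u < n \<Longrightarrow> P u 0 1 = (if u = 1 then 1 else 0)"
proof (rule cm.Sid[OF cmP h0P, where q = "\<lambda>t. P 1 t 1"])
  show "P 1 1 1 \<noteq> 0" by (rule p11)
  fix m assume m: "m < n"
  have n1: "1 < n" using n2 by simp
  have e: "(\<Sum>j1\<le>m. \<Sum>s<n. \<Sum>t<n. P 1 j1 s * D 0 (m - j1) t * P s t 1) =
         (\<Sum>k1\<le>0. \<Sum>s<n. \<Sum>t<n. P 1 (0 - k1) s * P m k1 t * P s t 1)"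
    using cyc1[of 1 m 0 1] m n1 by simp
  have "(\<Sum>j1\<le>m. \<Sum>s<n. \<Sum>t<n. P 1 j1 s * D 0 (m - j1) t * P s t 1) =
        (\<Sum>j1\<le>m. P 1 j1 1 * (\<Sum>t<n. D 0 (m - j1) t * P 1 t 1))"
    using m by (simp add: mult.assoc sum_distrib_left[symmetric] col1P)
  also have "\<dots> = P 1 m 1 * (\<Sum>t<n. D 0 (m - m) t * P 1 t 1)"
    by (rule sum_single_in) (use m col0D in auto)
  also have "\<dots> = P 1 m 1 * P 1 0 1" using col0D[of 0] n1 by simp
  finally have L: "(\<Sum>j1\<le>m. \<Sum>s<n. \<Sum>t<n. P 1 j1 s * D 0 (m - j1) t * P s t 1) = P 1 m 1 * P 1 0 1" .
  have R: "(\<Sum>k1\<le>0. \<Sum>s<n. \<Sum>t<n. P 1 (0 - k1) s * P m k1 t * P s t 1) =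
         P 1 0 1 * (\<Sum>t<n. P m 0 t * P 1 t 1)"
    using n1 by (simp add: mult.assoc sum_distrib_left[symmetric] col1P)
  have "P 1 0 1 * (\<Sum>t<n. P m 0 t * P 1 t 1) = P 1 0 1 * P 1 m 1" using e L R by (metis mult.commute)
  then show "(\<Sum>t<n. P m 0 t * P 1 t 1) = P 1 m 1" using p10_d10 mult_left_cancel by blast
qed

lemma SD: "u < n \<Longrightarrow> D u 0 1 = (if u = 1 then 1 else 0)"
proof (rule cm.Sid[OF cmD h0D, where q = "\<lambda>t. P 1 t 1"])
  show "P 1 1 1 \<noteq> 0" by (rule p11)
  fix m assume m: "m < n"
  have n1: "1 < n" using n2 by simp
  have e: "(\<Sum>j1\<le>0. \<Sum>s<n. \<Sum>t<n. P 1 j1 s * D m (0 - j1) t * P s t 1) =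
         (\<Sum>k1\<le>m. \<Sum>s<n. \<Sum>t<n. P 1 (m - k1) s * P 0 k1 t * P s t 1)"
    using cyc1[of 1 0 m 1] m n1 by simp
  have L: "(\<Sum>j1\<le>0. \<Sum>s<n. \<Sum>t<n. P 1 j1 s * D m (0 - j1) t * P s t 1) =
          P 1 0 1 * (\<Sum>t<n. D m 0 t * P 1 t 1)"
    using n1 m by (simp add: mult.assoc sum_distrib_left[symmetric] col1P)
  have "(\<Sum>k1\<le>m. \<Sum>s<n. \<Sum>t<n. P 1 (m - k1) s * P 0 k1 t * P s t 1) =
        (\<Sum>k1\<le>m. P 1 (m - k1) 1 * (\<Sum>t<n. P 0 k1 t * P 1 t 1))"
    using m by (simp add: mult.assoc sum_distrib_left[symmetric] col1P)
  also have "\<dots> = P 1 (m - 0) 1 * (\<Sum>t<n. P 0 0 t * P 1 t 1)"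
    by (rule sum_single_in) (use m col0P in auto)
  also have "\<dots> = P 1 m 1 * P 1 0 1" using col0P[of 0] n1 by simp
  finally have R: "(\<Sum>k1\<le>m. \<Sum>s<n. \<Sum>t<n. P 1 (m - k1) s * P 0 k1 t * P s t 1) = P 1 m 1 * P 1 0 1" .
  have "P 1 0 1 * (\<Sum>t<n. D m 0 t * P 1 t 1) = P 1 0 1 * P 1 m 1" using e L R by (metis mult.commute)
  then show "(\<Sum>t<n. D m 0 t * P 1 t 1) = P 1 m 1" using p10_d10 mult_left_cancel by blast
qed

lemmas F0P = cm.F0[OF cmP h0P SP] and F0D = cm.F0[OF cmD h0D SD]
lemmas G1P = cm.G1[OF cmP h0P SP] and G1D = cm.G1[OF cmD h0D SD]
lemmas colSP = cm.colS[OF cmP h0P SP] and colSD = cm.colS[OF cmD h0D SD]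
lemmas CM0P = cm.CM0[OF cmP] and CM0D = cm.CM0[OF cmD]
lemmas CMrecP = cm.CMrec[OF cmP] and CMrecD = cm.CMrec[OF cmD]
lemmas f00P = cm.f00[OF cmP] and f00D = cm.f00[OF cmD]

lemma agree:
  assumes IH: "\<And>u v. u < n \<Longrightarrow> v < n \<Longrightarrow> u + v < m \<Longrightarrow> D u v 1 = P u v 1"
  shows "s < n \<Longrightarrow> 1 \<le> s \<Longrightarrow> u < n \<Longrightarrow> v < n \<Longrightarrow> u + v < m + s - 1 \<Longrightarrow> D u v s = P u v s"
proof (induction s arbitrary: u v)
  case 0 then show ?case by simp
next
  case (Suc s)
  show ?case
  proof (cases "s = 0")
    case True then show ?thesis using IH Suc.prems by (simp add: One_nat_def[symmetric])
  next
    case s0: False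
    have "D u v (Suc s) = cv D s u v" using CMrecD[of u v s] Suc.prems by simp
    moreover have "P u v (Suc s) = cv P s u v" using CMrecP[of u v s] Suc.prems by simp
    moreover have "cv D s u v = cv P s u v" unfolding cv_def
    proof (intro sum.cong refl)
      fix i1 j1 assume a: "i1 \<in> {..u}" "j1 \<in> {..v}"
      show "D i1 j1 1 * D (u - i1) (v - j1) s = P i1 j1 1 * P (u - i1) (v - j1) s"
      proof (cases "i1 + j1 < m")
        case True
        then have e1: "D i1 j1 1 = P i1 j1 1" using IH a Suc.prems by simp
        show ?thesis
        proof (cases "i1 = 0 \<and> j1 = 0")
          case True then show ?thesis using f00P f00D by simp
        next
          case False
          then have "(u - i1) + (v - j1) < m + s - 1" using a Suc.prems by auto
          then have "D (u - i1) (v - j1) s = P (u - i1) (v - j1) s"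
            using Suc.IH[of "u - i1" "v - j1"] a Suc.prems s0 by auto
          then show ?thesis using e1 by simp
        qed
      next
        case False
        then have "u - i1 < s" using a Suc.prems by auto
        then show ?thesis using F1P[of s "u - i1" "v - j1"] F1D[of s "u - i1" "v - j1"] a Suc.prems by simp
      qed
    qed
    ultimately show ?thesis by simp
  qed
qed

lemma lin5: "a1 + b1 = r1 \<Longrightarrow> a3 + b3 = r3 \<Longrightarrow> a1 - a3 = x \<Longrightarrow> b1 - b3 = y \<Longrightarrow> r1 - r3 = z \<Longrightarrow> x + y = (z::'b::ab_group_add)"
  by (metis add_diff_add)

lemma stepB:
  assumes IH: "\<And>u v. u < n \<Longrightarrow> v < n \<Longrightarrow> u + v < m \<Longrightarrow> D u v 1 = P u v 1"
    and i1: "1 \<le> i" and k2: "2 \<le> k" and im: "i + k = m" and i: "i < n" and k: "k < n"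
  shows "D i k 1 = P i k 1"
proof -
  have n1: "1 < n" using n2 by simp
  have m3: "3 \<le> m" using i1 k2 im by simp
  have d11: "D 1 1 1 = P 1 1 1" using IH[of 1 1] n1 m3 by simp
  have p10: "P 1 0 1 = 1" using SP[of 1] n1 by simp
  note ag = agree[of m, OF IH]
  have e1: "(\<Sum>j1\<le>1. \<Sum>s<n. \<Sum>t<n. P i j1 s * D k (1 - j1) t * P s t 1) =
         (\<Sum>k1\<le>k. \<Sum>s<n. \<Sum>t<n. P i (k - k1) s * P 1 k1 t * P s t 1)"
    using cyc1[of i 1 k 1] i k n1 by simp
  have e3: "(\<Sum>j1\<le>1. \<Sum>s<n. \<Sum>t<n. D i j1 s * D k (1 - j1) t * D s t 1) =
         (\<Sum>k1\<le>k. \<Sum>s<n. \<Sum>t<n. D i (k - k1) s * P 1 k1 t * D s t 1)"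
    using cyc3[of i 1 k 1] i k n1 by simp
  have L1: "(\<Sum>j1\<le>1. \<Sum>s<n. \<Sum>t<n. P i j1 s * D k (1 - j1) t * P s t 1) =
      (\<Sum>t<n. D k 1 t * P i t 1) + (\<Sum>s<n. P i 1 s * P s k 1)"
    using i k n1 by (simp add: sum_atMost1 mult.assoc sum_distrib_left[symmetric] colSP colSD)
  have L3: "(\<Sum>j1\<le>1. \<Sum>s<n. \<Sum>t<n. D i j1 s * D k (1 - j1) t * D s t 1) =
      (\<Sum>t<n. D k 1 t * D i t 1) + (\<Sum>s<n. D i 1 s * D s k 1)"
    using i k n1 by (simp add: sum_atMost1 mult.assoc sum_distrib_left[symmetric] colSD)
  have R1: "(\<Sum>k1\<le>k. \<Sum>s<n. \<Sum>t<n. P i (k - k1) s * P 1 k1 t * P s t 1) =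
      (\<Sum>k1\<le>k. \<Sum>s<n. P i (k - k1) s * (P 1 k1 1 * P s 1 1))"
    using i k n1 by (simp add: mult.assoc sum_distrib_left[symmetric] col1P)
  have R3: "(\<Sum>k1\<le>k. \<Sum>s<n. \<Sum>t<n. D i (k - k1) s * P 1 k1 t * D s t 1) =
      (\<Sum>k1\<le>k. \<Sum>s<n. D i (k - k1) s * (P 1 k1 1 * D s 1 1))"
    using i k n1 by (simp add: mult.assoc sum_distrib_left[symmetric] col1P)
  have dL1: "(\<Sum>t<n. D k 1 t * P i t 1) - (\<Sum>t<n. D k 1 t * D i t 1) = D k 1 k * P i k 1 - D k 1 k * D i k 1"
  proof -
    have "(\<Sum>t<n. D k 1 t * P i t 1) - (\<Sum>t<n. D k 1 t * D i t 1) = (\<Sum>t<n. D k 1 t * P i t 1 - D k 1 t * D i t 1)"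
      by (simp add: sum_subtractf)
    also have "\<dots> = D k 1 k * P i k 1 - D k 1 k * D i k 1"
    proof (rule sum_single_in)
      fix t assume t: "t \<in> {..<n}" "t \<noteq> k"
      show "D k 1 t * P i t 1 - D k 1 t * D i t 1 = 0"
      proof (cases "t < k")
        case True then show ?thesis using IH[of i t] t i im by simp
      next
        case False then show ?thesis using F1D[of t k 1] t k n1 by simp
      qed
    qed (use k in auto)
    finally show ?thesis .
  qed
  have dL2: "(\<Sum>s<n. P i 1 s * P s k 1) - (\<Sum>s<n. D i 1 s * D s k 1) = P i 1 i * P i k 1 - D i 1 i * D i k 1"
  proof -
    have "(\<Sum>s<n. P i 1 s * P s k 1) - (\<Sum>s<n. D i 1 s * D s k 1) = (\<Sum>s<n. P i 1 s * P s k 1 - D i 1 s * D s k 1)"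
      by (simp add: sum_subtractf)
    also have "\<dots> = P i 1 i * P i k 1 - D i 1 i * D i k 1"
    proof (rule sum_single_in)
      fix s assume s: "s \<in> {..<n}" "s \<noteq> i"
      show "P i 1 s * P s k 1 - D i 1 s * D s k 1 = 0"
      proof (cases "s < i")
        case True
        show ?thesis
        proof (cases "s = 0")
          case True then show ?thesis using CM0P[of i 1] CM0D[of i 1] i1 i n1 by simp
        next
          case False
          then have "D i 1 s = P i 1 s" using ag[of s i 1] s i n1 im k2 by simp
          moreover have "D s k 1 = P s k 1" using IH[of s k] s k im \<open>s < i\<close> by simp
          ultimately show ?thesis by simp
        qed
      next
        case False then show ?thesis using F1P[of s i 1] F1D[of s i 1] s i n1 by simp
      qed
    qed (use i in auto)
    finally show ?thesis .
  qed
  have dR: "(\<Sum>k1\<le>k. \<Sum>s<n. P i (k - k1) s * (P 1 k1 1 * P s 1 1)) -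
            (\<Sum>k1\<le>k. \<Sum>s<n. D i (k - k1) s * (P 1 k1 1 * D s 1 1)) = P i k 1 * P 1 1 1 - D i k 1 * D 1 1 1"
  proof -
    have "(\<Sum>k1\<le>k. \<Sum>s<n. P i (k - k1) s * (P 1 k1 1 * P s 1 1)) -
            (\<Sum>k1\<le>k. \<Sum>s<n. D i (k - k1) s * (P 1 k1 1 * D s 1 1)) =
          (\<Sum>k1\<le>k. \<Sum>s<n. P i (k - k1) s * (P 1 k1 1 * P s 1 1) - D i (k - k1) s * (P 1 k1 1 * D s 1 1))"
      by (simp add: sum_subtractf)
    also have "\<dots> = (\<Sum>s<n. P i (k - 0) s * (P 1 0 1 * P s 1 1) - D i (k - 0) s * (P 1 0 1 * D s 1 1))"
    proof (rule sum_single_in)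
      fix k1 assume k1: "k1 \<in> {..k}" "k1 \<noteq> 0"
      show "(\<Sum>s<n. P i (k - k1) s * (P 1 k1 1 * P s 1 1) - D i (k - k1) s * (P 1 k1 1 * D s 1 1)) = 0"
      proof (intro sum.neutral ballI)
        fix s assume s: "s \<in> {..<n}"
        show "P i (k - k1) s * (P 1 k1 1 * P s 1 1) - D i (k - k1) s * (P 1 k1 1 * D s 1 1) = 0"
        proof (cases "s = 0")
          case True then show ?thesis using CM0P[of i "k - k1"] CM0D[of i "k - k1"] i1 i k by simp
        next
          case s0: False
          have dp: "D i (k - k1) s = P i (k - k1) s" using ag[of s i "k - k1"] s s0 i k k1 im by simp
          show ?thesis
          proof (cases "i < s")
            case True then show ?thesis using dp F1P[of s i "k - k1"] s i k by simp
          next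
            case False
            then have "D s 1 1 = P s 1 1" using IH[of s 1] s n1 im k2 by simp
            then show ?thesis using dp by simp
          qed
        qed
      qed
    qed auto
    also have "\<dots> = P i k 1 * P 1 1 1 - D i k 1 * D 1 1 1"
    proof (rule sum_single_in[THEN trans])
      fix s assume s: "s \<in> {..<n}" "s \<noteq> 1"
      show "P i (k - 0) s * (P 1 0 1 * P s 1 1) - D i (k - 0) s * (P 1 0 1 * D s 1 1) = 0"
      proof (cases "s = 0")
        case True then show ?thesis using CM0P[of i k] CM0D[of i k] i1 i k by simp
      next
        case s0: False
        have dp: "D i k s = P i k s" using ag[of s i k] s s0 i k im by simp
        show ?thesis
        proof (cases "i < s")
          case True then show ?thesis using dp F1P[of s i k] s i k by simp
        next
          case False
          then have "D s 1 1 = P s 1 1" using IH[of s 1] s n1 im k2 by simp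
          then show ?thesis using dp by simp
        qed
      qed
    qed (use n1 p10 in auto)
    finally show ?thesis .
  qed
  have s1: "(\<Sum>t<n. D k 1 t * P i t 1) + (\<Sum>s<n. P i 1 s * P s k 1) =
      (\<Sum>k1\<le>k. \<Sum>s<n. P i (k - k1) s * (P 1 k1 1 * P s 1 1))"
    using e1 L1 R1 by simp
  have s3: "(\<Sum>t<n. D k 1 t * D i t 1) + (\<Sum>s<n. D i 1 s * D s k 1) =
      (\<Sum>k1\<le>k. \<Sum>s<n. D i (k - k1) s * (P 1 k1 1 * D s 1 1))"
    using e3 L3 R3 by simp
  have main: "D k 1 k * P i k 1 - D k 1 k * D i k 1 + (P i 1 i * P i k 1 - D i 1 i * D i k 1) =
              P i k 1 * P 1 1 1 - D i k 1 * D 1 1 1"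
    by (rule lin5[OF s1 s3 dL1 dL2 dR])
  have "D k 1 k = of_nat k * P 1 1 1" using G1D[of k] k d11 by simp
  moreover have "D i 1 i = of_nat i * P 1 1 1" using G1D[of i] i d11 by simp
  moreover have "P i 1 i = of_nat i * P 1 1 1" using G1P[of i] i by simp
  ultimately have "(of_nat k + of_nat i - 1) * P 1 1 1 * (P i k 1 - D i k 1) = 0"
    using main d11 by (simp add: algebra_simps)
  moreover have "(of_nat k + of_nat i - 1 :: 'a) \<noteq> 0"
  proof -
    have "(of_nat k + of_nat i - 1 :: 'a) = of_nat (k + i - 1)" using k2 by (simp add: of_nat_diff)
    moreover have "k + i - 1 = Suc (k + i - 2)" using k2 by simp
    ultimately show ?thesis using of_nat_neq_0[of "k + i - 2", where 'a='a] by metis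
  qed
  ultimately show ?thesis using p11 by simp
qed

lemma lin4:
  assumes "a + c = b" "d = c + a'" "a - a' = x" "d - b = y" shows "x = - (y::'b::ab_group_add)"
proof -
  have "y = (c + a') - (a + c)" using assms(1,2,4) by simp
  then have y: "y = a' - a" by (simp add: algebra_simps)
  have "x = a - a'" using assms(3) by simp
  then show ?thesis using y by (simp only: minus_diff_eq)
qed

lemma stepA:
  assumes IH: "\<And>u v. u < n \<Longrightarrow> v < n \<Longrightarrow> u + v < m \<Longrightarrow> D u v 1 = P u v 1"
    and m2: "2 \<le> m" and mn: "m - 1 < n"
  shows "P 1 1 1 * (D (m - 1) 1 1 - P (m - 1) 1 1) = P 1 1 1 * (P 1 (m - 1) 1 - D 1 (m - 1) 1)"
proof -
  define M where "M = m - 1"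
  have M1: "1 \<le> M" and Mn: "M < n" and mM: "m = M + 1" using m2 mn by (auto simp: M_def)
  have n1: "1 < n" using n2 by simp
  have p10: "P 1 0 1 = 1" using SP[of 1] n1 by simp
  note ag = agree[of m, OF IH]
  have e1: "(\<Sum>j1\<le>1. \<Sum>s<n. \<Sum>t<n. P 1 j1 s * D M (1 - j1) t * P s t 1) =
         (\<Sum>k1\<le>M. \<Sum>s<n. \<Sum>t<n. P 1 (M - k1) s * P 1 k1 t * P s t 1)"
    using cyc1[of 1 1 M 1] Mn n1 by simp
  have e2: "(\<Sum>j1\<le>M. \<Sum>s<n. \<Sum>t<n. P 1 j1 s * D 1 (M - j1) t * P s t 1) =
         (\<Sum>k1\<le>1. \<Sum>s<n. \<Sum>t<n. P 1 (1 - k1) s * P M k1 t * P s t 1)"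
    using cyc1[of 1 M 1 1] Mn n1 by simp
  have L1: "(\<Sum>j1\<le>1. \<Sum>s<n. \<Sum>t<n. P 1 j1 s * D M (1 - j1) t * P s t 1) =
      (\<Sum>t<n. D M 1 t * P 1 t 1) + P 1 1 1 * P 1 M 1"
    using Mn n1 p10 by (simp add: sum_atMost1 mult.assoc sum_distrib_left[symmetric] col1P colSD)
  have R1: "(\<Sum>k1\<le>M. \<Sum>s<n. \<Sum>t<n. P 1 (M - k1) s * P 1 k1 t * P s t 1) =
      (\<Sum>k1\<le>M. P 1 (M - k1) 1 * (P 1 k1 1 * P 1 1 1))"
    using Mn n1 by (simp add: mult.assoc sum_distrib_left[symmetric] col1P)
  have L2: "(\<Sum>j1\<le>M. \<Sum>s<n. \<Sum>t<n. P 1 j1 s * D 1 (M - j1) t * P s t 1) =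
      (\<Sum>j1\<le>M. P 1 j1 1 * (D 1 (M - j1) 1 * P 1 1 1))"
    using Mn n1 by (simp add: mult.assoc sum_distrib_left[symmetric] col1P col1D)
  have R2: "(\<Sum>k1\<le>1. \<Sum>s<n. \<Sum>t<n. P 1 (1 - k1) s * P M k1 t * P s t 1) =
      P 1 1 1 * P 1 M 1 + (\<Sum>t<n. P M 1 t * P 1 t 1)"
    using Mn n1 p10 by (simp add: sum_atMost1 mult.assoc sum_distrib_left[symmetric] col1P colSP)
  have rev: "(\<Sum>k1\<le>M. P 1 (M - k1) 1 * (P 1 k1 1 * P 1 1 1)) = (\<Sum>j1\<le>M. P 1 j1 1 * (P 1 (M - j1) 1 * P 1 1 1))"
    by (rule sum.reindex_bij_witness[where i="\<lambda>k. M - k" and j="\<lambda>k. M - k"]) (auto simp: algebra_simps)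
  have dA1: "(\<Sum>t<n. D M 1 t * P 1 t 1) - (\<Sum>t<n. P M 1 t * P 1 t 1) = D M 1 1 * P 1 1 1 - P M 1 1 * P 1 1 1"
  proof -
    have "(\<Sum>t<n. D M 1 t * P 1 t 1) - (\<Sum>t<n. P M 1 t * P 1 t 1) = (\<Sum>t<n. D M 1 t * P 1 t 1 - P M 1 t * P 1 t 1)"
      by (simp add: sum_subtractf)
    also have "\<dots> = D M 1 1 * P 1 1 1 - P M 1 1 * P 1 1 1"
    proof (rule sum_single_in)
      fix t assume t: "t \<in> {..<n}" "t \<noteq> 1"
      show "D M 1 t * P 1 t 1 - P M 1 t * P 1 t 1 = 0"
      proof (cases "t = 0")
        case True then show ?thesis using CM0P[of M 1] CM0D[of M 1] M1 Mn n1 by simp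
      next
        case False then show ?thesis using ag[of t M 1] t M1 Mn n1 mM by simp
      qed
    qed (use n1 in auto)
    finally show ?thesis .
  qed
  have dA2: "(\<Sum>j1\<le>M. P 1 j1 1 * (D 1 (M - j1) 1 * P 1 1 1)) - (\<Sum>j1\<le>M. P 1 j1 1 * (P 1 (M - j1) 1 * P 1 1 1))
       = D 1 M 1 * P 1 1 1 - P 1 M 1 * P 1 1 1"
  proof -
    have "(\<Sum>j1\<le>M. P 1 j1 1 * (D 1 (M - j1) 1 * P 1 1 1)) - (\<Sum>j1\<le>M. P 1 j1 1 * (P 1 (M - j1) 1 * P 1 1 1))
       = (\<Sum>j1\<le>M. P 1 j1 1 * (D 1 (M - j1) 1 * P 1 1 1) - P 1 j1 1 * (P 1 (M - j1) 1 * P 1 1 1))"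
      by (simp add: sum_subtractf)
    also have "\<dots> = P 1 0 1 * (D 1 (M - 0) 1 * P 1 1 1) - P 1 0 1 * (P 1 (M - 0) 1 * P 1 1 1)"
    proof (rule sum_single_in)
      fix j1 assume j: "j1 \<in> {..M}" "j1 \<noteq> 0"
      then have "D 1 (M - j1) 1 = P 1 (M - j1) 1" using IH[of 1 "M - j1"] Mn n1 mM by simp
      then show "P 1 j1 1 * (D 1 (M - j1) 1 * P 1 1 1) - P 1 j1 1 * (P 1 (M - j1) 1 * P 1 1 1) = 0" by simp
    qed auto
    also have "\<dots> = D 1 M 1 * P 1 1 1 - P 1 M 1 * P 1 1 1" using p10 by simp
    finally show ?thesis .
  qed
  have s1: "(\<Sum>t<n. D M 1 t * P 1 t 1) + P 1 1 1 * P 1 M 1 = (\<Sum>j1\<le>M. P 1 j1 1 * (P 1 (M - j1) 1 * P 1 1 1))"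
    using e1 L1 R1 rev by simp
  have s2: "(\<Sum>j1\<le>M. P 1 j1 1 * (D 1 (M - j1) 1 * P 1 1 1)) = P 1 1 1 * P 1 M 1 + (\<Sum>t<n. P M 1 t * P 1 t 1)"
    using e2 L2 R2 by simp
  have "D M 1 1 * P 1 1 1 - P M 1 1 * P 1 1 1 = - (D 1 M 1 * P 1 1 1 - P 1 M 1 * P 1 1 1)"
    by (rule lin4[OF s1 s2 dA1 dA2])
  then show ?thesis unfolding M_def[symmetric] by (simp add: algebra_simps)
qed

lemma stepAll:
  assumes IH: "\<And>u v. u < n \<Longrightarrow> v < n \<Longrightarrow> u + v < m \<Longrightarrow> D u v 1 = P u v 1"
    and u: "u < n" and v: "v < n" and uv: "u + v = m"
  shows "D u v 1 = P u v 1"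
proof -
  have n1: "1 < n" using n2 by simp
  show ?thesis
  proof (cases "u = 0")
    case True then show ?thesis using h0P h0D v by simp
  next
    case u0: False
    show ?thesis
    proof (cases "v = 0")
      case True then show ?thesis using SP SD u by simp
    next
      case v0: False
      show ?thesis
      proof (cases "v = 1")
        case v1: True
        then have um: "u = m - 1" "2 \<le> m" using uv u0 by auto
        have A: "P 1 1 1 * (D (m - 1) 1 1 - P (m - 1) 1 1) = P 1 1 1 * (P 1 (m - 1) 1 - D 1 (m - 1) 1)"
          using stepA[OF IH um(2)] um u by simp
        show ?thesis
        proof (cases "m = 2")
          case True
          then have "u = 1" using um by simp
          then have "P 1 1 1 * (D 1 1 1 - P 1 1 1) = P 1 1 1 * (P 1 1 1 - D 1 1 1)" using A um by simp
          then have "D 1 1 1 - P 1 1 1 = P 1 1 1 - D 1 1 1" using p11 by simp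
          then have "2 * (D 1 1 1 - P 1 1 1) = 0" by (simp add: algebra_simps)
          then show ?thesis using \<open>u = 1\<close> v1 by simp
        next
          case False
          then have "D 1 u 1 = P 1 u 1" using stepB[of m 1 u, OF IH] um u n1 by simp
          then show ?thesis using A um v1 p11 by simp
        qed
      next
        case False
        then show ?thesis using stepB[of m u v, OF IH] u0 v0 u v uv by simp
      qed
    qed
  qed
qed

lemma allagree: "\<forall>u v. u < n \<longrightarrow> v < n \<longrightarrow> u + v < m \<longrightarrow> D u v 1 = P u v 1"
proof (induction m)
  case 0 then show ?case by simp
next
  case (Suc m)
  show ?case
  proof (intro allI impI)
    fix u v assume a: "u < n" "v < n" "u + v < Suc m"
    show "D u v 1 = P u v 1"
    proof (cases "u + v < m")
      case True then show ?thesis using Suc.IH a by simp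
    next
      case False
      then have "u + v = m" using a by simp
      then show ?thesis using stepAll[of m u v] Suc.IH a by simp
    qed
  qed
qed

lemma final: "\<forall>i<n. \<forall>j<n. \<forall>k<n. D i j k = P i j k"
proof -
  have d1: "D u v 1 = P u v 1" if "u < n" "v < n" for u v
    using allagree[of "2 * n"] that by simp
  have "\<forall>i<n. \<forall>j<n. D i j k = P i j k" if "k < n" for k
    using that
  proof (induction k)
    case 0 then show ?case using CM0P CM0D by simp
  next
    case (Suc k)
    show ?case
    proof (intro allI impI)
      fix i j assume ij: "i < n" "j < n"
      show "D i j (Suc k) = P i j (Suc k)"
      proof (cases "k = 0")
        case True then show ?thesis using d1 ij by (simp add: One_nat_def[symmetric])
      next
        case False
        have "D i j (Suc k) = cv D k i j" using CMrecD[of i j k] ij Suc.prems by simp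
        also have "\<dots> = cv P k i j" unfolding cv_def
          using d1 Suc.IH Suc.prems ij by (intro sum.cong refl) simp
        also have "\<dots> = P i j (Suc k)" using CMrecP[of i j k] ij Suc.prems by simp
        finally show ?thesis .
      qed
    qed
  qed
  then show ?thesis by blast
qed

end

theorem theorem4p4:
  fixes P D :: "nat \<Rightarrow> nat \<Rightarrow> nat \<Rightarrow> 'a::field_char_0" and n :: nat
  assumes "alg_closed_field TYPE('a)"
    and "n \<ge> 2"
    and "regular_q_cycle n P D"
    and "P 1 1 1 \<noteq> 0"
  shows "\<forall>i<n. \<forall>j<n. \<forall>k<n. D i j k = P i j k"
proof -
  interpret qc n P D using assms by unfold_locales auto
  show ?thesis by (rule final)
qed

end
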